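(* Let $f,g:[a,b]\to\mathbb{R}$, $a<b$, be convex functions such that $f$, $g$, $fg$ are integrable on $[a,b]$. Then \begin{align*} &\frac{g(b)}{(b-a)^2}\int_a^b (x-a)f(x)\,dx+\frac{g(a)}{(b-a)^2}\int_a^b (b-x)f(x)\,dx+\frac{f(b)}{(b-a)^2}\int_a^b (x-a)g(x)\,dx+\frac{f(a)}{(b-a)^2}\int_a^b (b-x)g(x)\,dx\\ &\le \frac{1}{b-a}\int_a^b f(x)g(x)\,dx+\frac13 M(a,b)+\frac16 N(a,b), \end{align*} where $M(a,b)=f(a)g(a)+f(b)g(b)$ and $N(a,b)=f(a)g(b)+f(b)g(a)$. *)

theory Defs
  imports "HOL-Analysis.Analysis"
begin

end

theory Submission
  imports Defs
begin

lemma wint: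
  fixes f l w :: "real \<Rightarrow> real"
  assumes f: "f integrable_on {a..b}" and l: "continuous_on {a..b} l"
    and le: "\<And>x. x \<in> {a..b} \<Longrightarrow> f x \<le> l x" and w: "continuous_on {a..b} w"
  shows "(\<lambda>x. w x * f x) integrable_on {a..b}"
proof -
  have li: "l integrable_on {a..b}" using l integrable_continuous_real by blast
  have d: "(\<lambda>x. l x - f x) integrable_on {a..b}" using li f by (rule integrable_diff)
  have da: "(\<lambda>x. l x - f x) absolutely_integrable_on {a..b}"
    by (rule nonnegative_absolutely_integrable_1[OF d]) (use le in auto)
  have wm: "w \<in> borel_measurable (lebesgue_on {a..b})"
    using w by (intro continuous_imp_measurable_on_sets_lebesgue) auto
  have wb: "bounded (w ` {a..b})"
    using w compact_continuous_image compact_imp_bounded by blast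
  have "(\<lambda>x. w x * (l x - f x)) absolutely_integrable_on {a..b}"
    by (rule absolutely_integrable_bounded_measurable_product_real[OF wm _ wb da]) auto
  hence i1: "(\<lambda>x. w x * (l x - f x)) integrable_on {a..b}"
    using absolutely_integrable_on_def by blast
  have i2: "(\<lambda>x. w x * l x) integrable_on {a..b}"
    by (intro integrable_continuous_real continuous_intros w l)
  have "(\<lambda>x. w x * l x - w x * (l x - f x)) integrable_on {a..b}"
    using i2 i1 by (rule integrable_diff)
  thus ?thesis by (simp add: algebra_simps)
qed

lemma convex_le_chord:
  fixes f :: "real \<Rightarrow> real"
  assumes ab: "a < b" and c: "convex_on {a..b} f" and x: "x \<in> {a..b}"
  shows "f x \<le> ((b - x) * f a + (x - a) * f b) / (b - a)"
proof -
  define t where "t = (x - a) / (b - a)"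
  have t0: "0 \<le> t" "t \<le> 1" using ab x by (auto simp: t_def field_simps)
  have tt: "t * (b - a) = x - a" using ab by (simp add: t_def)
  have xe: "x = (1 - t) * a + t * b" using tt by (simp add: algebra_simps)
  have "f ((1 - t) * a + t * b) \<le> (1 - t) * f a + t * f b"
    using convex_onD[OF c t0, of a b] ab by simp
  also have "\<dots> = ((b - x) * f a + (x - a) * f b) / (b - a)"
  proof -
    have "1 - t = (b - x) / (b - a)" using ab by (simp add: t_def field_simps)
    thus ?thesis by (simp add: t_def add_divide_distrib)
  qed
  finally show ?thesis using xe by simp
qed

lemma pw_ident:
  fixes d u v A B C D F G :: real
  assumes "d \<noteq> 0"
  shows "d * (((u * A + v * B) / d - F) * ((u * C + v * D) / d - G)) =
     d * (F * G) + ((A * C) * u^2 + (B * D) * v^2 + (A * D + B * C) * (u * v)) / d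
     - (A * (u * G) + B * (v * G) + C * (u * F) + D * (v * F))"
  using assms by (simp add: field_simps power2_eq_square)

lemma fin_ident:
  fixes d I X Y Z :: real
  assumes "d \<noteq> 0"
  shows "(d * I + (X * (d^3 / 3) + Y * (d^3 / 3) + Z * (d^3 / 6)) / d) / d^2
     = 1 / d * I + 1/3 * (X + Y) + 1/6 * Z"
  using assms by (simp add: field_simps power2_eq_square power3_eq_cube)

theorem corollary2:
  fixes f g :: "real \<Rightarrow> real" and a b :: real
  assumes "a < b"
    and "convex_on {a..b} f" and "convex_on {a..b} g"
    and "f integrable_on {a..b}" and "g integrable_on {a..b}"
    and "(\<lambda>x. f x * g x) integrable_on {a..b}"
  shows "g b / (b - a)^2 * integral {a..b} (\<lambda>x. (x - a) * f x)
       + g a / (b - a)^2 * integral {a..b} (\<lambda>x. (b - x) * f x)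
       + f b / (b - a)^2 * integral {a..b} (\<lambda>x. (x - a) * g x)
       + f a / (b - a)^2 * integral {a..b} (\<lambda>x. (b - x) * g x)
     \<le> 1 / (b - a) * integral {a..b} (\<lambda>x. f x * g x)
       + 1/3 * (f a * g a + f b * g b) + 1/6 * (f a * g b + f b * g a)"
proof -
  note ab = assms(1)
  define Lf where "Lf x = ((b - x) * f a + (x - a) * f b) / (b - a)" for x
  define Lg where "Lg x = ((b - x) * g a + (x - a) * g b) / (b - a)" for x
  have fle: "f x \<le> Lf x" if "x \<in> {a..b}" for x
    unfolding Lf_def by (rule convex_le_chord[OF ab assms(2) that])
  have gle: "g x \<le> Lg x" if "x \<in> {a..b}" for x
    unfolding Lg_def by (rule convex_le_chord[OF ab assms(3) that])
  have cLf: "continuous_on {a..b} Lf" unfolding Lf_def using ab by (intro continuous_intros) auto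
  have cLg: "continuous_on {a..b} Lg" unfolding Lg_def using ab by (intro continuous_intros) auto
  have iPf: "(\<lambda>x. (x - a) * f x) integrable_on {a..b}"
    by (rule wint[OF assms(4) cLf fle]) (auto intro!: continuous_intros)
  have iQf: "(\<lambda>x. (b - x) * f x) integrable_on {a..b}"
    by (rule wint[OF assms(4) cLf fle]) (auto intro!: continuous_intros)
  have iPg: "(\<lambda>x. (x - a) * g x) integrable_on {a..b}"
    by (rule wint[OF assms(5) cLg gle]) (auto intro!: continuous_intros)
  have iQg: "(\<lambda>x. (b - x) * g x) integrable_on {a..b}"
    by (rule wint[OF assms(5) cLg gle]) (auto intro!: continuous_intros)
  define P where "P = integral {a..b} (\<lambda>x. (x - a) * f x)"
  define Q where "Q = integral {a..b} (\<lambda>x. (b - x) * f x)"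
  define R where "R = integral {a..b} (\<lambda>x. (x - a) * g x)"
  define S where "S = integral {a..b} (\<lambda>x. (b - x) * g x)"
  define I where "I = integral {a..b} (\<lambda>x. f x * g x)"
  have hP: "((\<lambda>x. (x - a) * f x) has_integral P) {a..b}" using iPf P_def by auto
  have hQ: "((\<lambda>x. (b - x) * f x) has_integral Q) {a..b}" using iQf Q_def by auto
  have hR: "((\<lambda>x. (x - a) * g x) has_integral R) {a..b}" using iPg R_def by auto
  have hS: "((\<lambda>x. (b - x) * g x) has_integral S) {a..b}" using iQg S_def by auto
  have hI: "((\<lambda>x. f x * g x) has_integral I) {a..b}" using assms(6) I_def by auto
  define G1 where "G1 x = - ((b - x)^3 / 3)" for x :: real
  define G2 where "G2 x = (x - a)^3 / 3" for x :: real
  have p1: "((\<lambda>x. (b - x)^2) has_integral (b - a)^3 / 3) {a..b}"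
  proof -
    have "((\<lambda>x. (b - x)^2) has_integral (G1 b - G1 a)) {a..b}"
      using ab unfolding G1_def by (intro fundamental_theorem_of_calculus)
        (auto intro!: derivative_eq_intros simp: power2_eq_square power3_eq_cube field_simps)
    thus ?thesis by (simp add: G1_def power3_eq_cube algebra_simps)
  qed
  have p2: "((\<lambda>x. (x - a)^2) has_integral (b - a)^3 / 3) {a..b}"
  proof -
    have "((\<lambda>x. (x - a)^2) has_integral (G2 b - G2 a)) {a..b}"
      using ab unfolding G2_def by (intro fundamental_theorem_of_calculus)
        (auto intro!: derivative_eq_intros simp: power2_eq_square power3_eq_cube field_simps)
    thus ?thesis by (simp add: G2_def)
  qed
  define F where "F x = (a + b) * x^2 / 2 - a * b * x - x^3 / 3" for x :: real
  have p3: "((\<lambda>x. (b - x) * (x - a)) has_integral (b - a)^3 / 6) {a..b}"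
  proof -
    have "((\<lambda>x. (b - x) * (x - a)) has_integral (F b - F a)) {a..b}"
      using ab unfolding F_def by (intro fundamental_theorem_of_calculus)
        (auto intro!: derivative_eq_intros simp: power2_eq_square power3_eq_cube field_simps)
    moreover have "F b - F a = (b - a)^3 / 6"
      unfolding F_def by (simp add: power2_eq_square power3_eq_cube field_simps)
    ultimately show ?thesis by simp
  qed
  define K where "K = (f a * g a) * ((b - a)^3 / 3) + (f b * g b) * ((b - a)^3 / 3) + (f a * g b + f b * g a) * ((b - a)^3 / 6)"
  have hL: "((\<lambda>x. f a * ((b - x) * g x) + f b * ((x - a) * g x) + g a * ((b - x) * f x) + g b * ((x - a) * f x))
      has_integral (f a * S + f b * R + g a * Q + g b * P)) {a..b}"
    by (intro has_integral_add has_integral_mult_right hP hQ hR hS)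
  have hRt: "((\<lambda>x. (b - a) * (f x * g x) + ((f a * g a) * (b - x)^2 + (f b * g b) * (x - a)^2
        + (f a * g b + f b * g a) * ((b - x) * (x - a))) / (b - a))
      has_integral ((b - a) * I + K / (b - a))) {a..b}"
    unfolding K_def
    by (intro has_integral_add has_integral_mult_right has_integral_divide hI p1 p2 p3)
  have pw: "f a * ((b - x) * g x) + f b * ((x - a) * g x) + g a * ((b - x) * f x) + g b * ((x - a) * f x)
      \<le> (b - a) * (f x * g x) + ((f a * g a) * (b - x)^2 + (f b * g b) * (x - a)^2
        + (f a * g b + f b * g a) * ((b - x) * (x - a))) / (b - a)" if x: "x \<in> {a..b}" for x
  proof -
    have "0 \<le> (Lf x - f x) * (Lg x - g x)" using fle[OF x] gle[OF x] by simp
    hence "0 \<le> (b - a) * ((Lf x - f x) * (Lg x - g x))" using ab by simp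
    moreover have "(b - a) * ((Lf x - f x) * (Lg x - g x)) =
      (b - a) * (f x * g x) + ((f a * g a) * (b - x)^2 + (f b * g b) * (x - a)^2
        + (f a * g b + f b * g a) * ((b - x) * (x - a))) / (b - a)
      - (f a * ((b - x) * g x) + f b * ((x - a) * g x) + g a * ((b - x) * f x) + g b * ((x - a) * f x))"
      using ab unfolding Lf_def Lg_def by (intro pw_ident) simp
    ultimately show ?thesis by linarith
  qed
  have main: "f a * S + f b * R + g a * Q + g b * P \<le> (b - a) * I + K / (b - a)"
    by (rule has_integral_le[OF hL hRt pw])
  have "g b / (b - a)^2 * P + g a / (b - a)^2 * Q + f b / (b - a)^2 * R + f a / (b - a)^2 * S
      = (f a * S + f b * R + g a * Q + g b * P) / (b - a)^2"
    by (simp add: add_divide_distrib algebra_simps)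
  also have "\<dots> \<le> ((b - a) * I + K / (b - a)) / (b - a)^2"
    using main ab by (simp add: divide_right_mono)
  also have "\<dots> = 1 / (b - a) * I + 1/3 * (f a * g a + f b * g b) + 1/6 * (f a * g b + f b * g a)"
    using ab unfolding K_def by (intro fin_ident) simp
  finally show ?thesis unfolding P_def Q_def R_def S_def I_def .
qed

end
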